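(* Let $F$ satisfy the hypotheses of the scalar-offset setting (i.e. $F+r$ satisfies (A1) and (A3) for some $r\in\mathbb R$), and consider the linear family with basis $\psi=(F;1)$, i.e. $F_\theta=\theta_1F+\theta_2$, $\theta=(\theta_1,\theta_2)\in\Theta\subset\mathbb R^2$, assuming (A2) and (A4). Define $\theta^\circ_1=\arg\min_{\vartheta\in\mathbb R}[\Lambda_0(\vartheta F)-\vartheta\pi^1(F)]$ (assumed to exist), $\theta^\circ_2=0$, $\theta^\circ=(\theta^\circ_1,\theta^\circ_2)$, $r^\circ=\varrho_a-\Lambda_0(F_{\theta^\circ})$ and $\theta^*=\theta^\circ+r^\circ(0,1)$, and suppose $\theta^*\in\Theta$. Then $\theta^*$ minimizes $\theta\mapsto\bar J^*_\infty(\kappa;\theta)$ over $\Theta$ for every $\kappa>1$.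
   Context: Setting: $(\mathsf Y,\mathcal B)$ measurable space; $X^0,X^1$ mutually independent stationary $\mathsf Y$-valued processes with marginals $\pi^0,\pi^1$, independent of a change time $\tau_a$; $\nu(G)=\int G\,d\nu$. $\Lambda_0(G)=\lim_n\frac1n\log E[\exp(\sum_{k=0}^{n-1}G(X^0_k))]$. (A1) for a function $G$: $\pi^0(G)<0<\pi^1(G)$. (A2): for some $\varrho_a\in(0,\infty)$, $\lim_n\frac1n\log P\{\tau_a\ge n\}=-\varrho_a$. (A3) for a function $G$: with $\Upsilon_0(\vartheta)=\Lambda_0(\vartheta G)$, $G$ belongs to the class $\mathcal G$ (functions for which the cumulant generating functions for $X^0,X^1$ exist finitely and the twisted marginals, twisted processes and relative entropy rates exist); there exist $\vartheta_+>\vartheta_0>0$ with $\Upsilon_0(\vartheta_0)=0$, $\Upsilon_0(\vartheta_+)=\varrho_a$; $\Upsilon_0$ is finite and $C^1$ near $[0,\vartheta_+]$; $\vartheta G\in\mathcal G$ for $\vartheta$ near $[0,\vartheta_+]$. (A4): $\Theta$ open; each $F_\theta$ satisfies (A3); components of $\psi$ are in $\mathcal G$; $(\vartheta,\theta)\mapsto\Lambda_0(\vartheta F_\theta)$ is $C^1$ near $\{(\vartheta,\theta):\vartheta\in[0,\vartheta_+^\theta],\theta\in\Theta\}$; $v^\top\psi\equiv1$ with $v=(0,1)$. Notation: $\vartheta_+^\theta$ solves $\Lambda_0(\vartheta_+^\theta F_\theta)=\varrho_a$ as in (A3); $m_1^\theta=\pi^1(F_\theta)$ (assumed positive); $\bar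 J^*_\infty(\kappa;\theta)=\frac{\log\kappa}{m_1^\theta\vartheta_+^\theta}$. *)

theory Defs
  imports "HOL-Probability.Probability"
begin

definition lnE :: "ennreal \<Rightarrow> ereal" where
  "lnE x = (if x = \<top> then \<infinity> else if x = 0 then -\<infinity> else ereal (ln (enn2real x)))"

text \<open>The n-th (n = Suc m) normalised log-moment generating functional
  (1/n) log E[exp(sum_{k<n} G(X_k))].\<close>
definition cgf_seq :: "'a measure \<Rightarrow> (nat \<Rightarrow> 'a \<Rightarrow> 'y) \<Rightarrow> ('y \<Rightarrow> real) \<Rightarrow> nat \<Rightarrow> ereal" where
  "cgf_seq M X G m =
     lnE (\<integral>\<^sup>+ \<omega>. ennreal (exp (\<Sum>k<Suc m. G (X k \<omega>))) \<partial>M) / ereal (real (Suc m))"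

definition has_cgf :: "'a measure \<Rightarrow> (nat \<Rightarrow> 'a \<Rightarrow> 'y) \<Rightarrow> ('y \<Rightarrow> real) \<Rightarrow> bool" where
  "has_cgf M X G \<longleftrightarrow> (\<exists>L. cgf_seq M X G \<longlonglongrightarrow> L)"

definition has_finite_cgf :: "'a measure \<Rightarrow> (nat \<Rightarrow> 'a \<Rightarrow> 'y) \<Rightarrow> ('y \<Rightarrow> real) \<Rightarrow> bool" where
  "has_finite_cgf M X G \<longleftrightarrow> (\<exists>r::real. cgf_seq M X G \<longlonglongrightarrow> ereal r)"

definition cgf :: "'a measure \<Rightarrow> (nat \<Rightarrow> 'a \<Rightarrow> 'y) \<Rightarrow> ('y \<Rightarrow> real) \<Rightarrow> ereal" where
  "cgf M X G = (THE L. cgf_seq M X G \<longlonglongrightarrow> L)"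

definition marg :: "'a measure \<Rightarrow> 'y measure \<Rightarrow> (nat \<Rightarrow> 'a \<Rightarrow> 'y) \<Rightarrow> 'y measure" where
  "marg M Y X = distr M Y (X 0)"

definition mean :: "'y measure \<Rightarrow> ('y \<Rightarrow> real) \<Rightarrow> real" where
  "mean \<pi> G = integral\<^sup>L \<pi> G"

definition proc :: "(nat \<Rightarrow> 'a \<Rightarrow> 'y) \<Rightarrow> 'a \<Rightarrow> (nat \<Rightarrow> 'y)" where
  "proc X \<omega> = (\<lambda>k. X k \<omega>)"

definition stationary :: "'a measure \<Rightarrow> 'y measure \<Rightarrow> (nat \<Rightarrow> 'a \<Rightarrow> 'y) \<Rightarrow> bool" where
  "stationary M Y X \<longleftrightarrow> (\<forall>k. X k \<in> measurable M Y) \<and>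
     (\<forall>n. distr M (PiM UNIV (\<lambda>_. Y)) (\<lambda>\<omega> k. X (k + n) \<omega>) = distr M (PiM UNIV (\<lambda>_. Y)) (proc X))"

text \<open>Class G (partially): G measurable, pi^0- and pi^1-integrable,
  and the cumulant generating functions for X^0 and X^1 exist finitely.\<close>
definition classG :: "'a measure \<Rightarrow> 'y measure \<Rightarrow> (nat \<Rightarrow> 'a \<Rightarrow> 'y) \<Rightarrow> (nat \<Rightarrow> 'a \<Rightarrow> 'y)
                      \<Rightarrow> ('y \<Rightarrow> real) \<Rightarrow> bool" where
  "classG M Y X0 X1 G \<longleftrightarrow> G \<in> borel_measurable Y \<and>
      integrable (marg M Y X0) G \<and> integrable (marg M Y X1) G \<and>
      has_finite_cgf M X0 G \<and> has_finite_cgf M X1 G"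

definition A1 :: "'a measure \<Rightarrow> 'y measure \<Rightarrow> (nat \<Rightarrow> 'a \<Rightarrow> 'y) \<Rightarrow> (nat \<Rightarrow> 'a \<Rightarrow> 'y)
                  \<Rightarrow> ('y \<Rightarrow> real) \<Rightarrow> bool" where
  "A1 M Y X0 X1 G \<longleftrightarrow> mean (marg M Y X0) G < 0 \<and> 0 < mean (marg M Y X1) G"

definition A3 :: "'a measure \<Rightarrow> 'y measure \<Rightarrow> (nat \<Rightarrow> 'a \<Rightarrow> 'y) \<Rightarrow> (nat \<Rightarrow> 'a \<Rightarrow> 'y)
                  \<Rightarrow> real \<Rightarrow> ('y \<Rightarrow> real) \<Rightarrow> bool" where
  "A3 M Y X0 X1 rho G \<longleftrightarrow> classG M Y X0 X1 G \<and>
     (\<exists>th0 thp. 0 < th0 \<and> th0 < thp \<and>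
        cgf M X0 (\<lambda>y. th0 * G y) = ereal 0 \<and> cgf M X0 (\<lambda>y. thp * G y) = ereal rho \<and>
        (\<exists>U. open U \<and> {0..thp} \<subseteq> U \<and>
           (\<forall>th\<in>U. has_finite_cgf M X0 (\<lambda>y. th * G y) \<and> classG M Y X0 X1 (\<lambda>y. th * G y)) \<and>
           (\<lambda>th. real_of_ereal (cgf M X0 (\<lambda>y. th * G y))) C1_differentiable_on U))"

definition vplus :: "'a measure \<Rightarrow> (nat \<Rightarrow> 'a \<Rightarrow> 'y) \<Rightarrow> real \<Rightarrow> ('y \<Rightarrow> real) \<Rightarrow> real" where
  "vplus M X0 rho G = (SOME thp. \<exists>th0. 0 < th0 \<and> th0 < thp \<and>
        cgf M X0 (\<lambda>y. th0 * G y) = ereal 0 \<and> cgf M X0 (\<lambda>y. thp * G y) = ereal rho)"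

definition Ftheta :: "('y \<Rightarrow> real) \<Rightarrow> real \<times> real \<Rightarrow> 'y \<Rightarrow> real" where
  "Ftheta F \<theta> = (\<lambda>y. fst \<theta> * F y + snd \<theta>)"

definition Jbar :: "'a measure \<Rightarrow> 'y measure \<Rightarrow> (nat \<Rightarrow> 'a \<Rightarrow> 'y) \<Rightarrow> (nat \<Rightarrow> 'a \<Rightarrow> 'y)
                    \<Rightarrow> real \<Rightarrow> ('y \<Rightarrow> real) \<Rightarrow> real \<Rightarrow> real \<times> real \<Rightarrow> real" where
  "Jbar M Y X0 X1 rho F \<kappa> \<theta> =
     ln \<kappa> / (mean (marg M Y X1) (Ftheta F \<theta>) * vplus M X0 rho (Ftheta F \<theta>))"

end

theory Submission
  imports Defs
begin

lemma holder_exp: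
  fixes S :: "'a \<Rightarrow> real" and l x z :: real
  assumes S: "S \<in> borel_measurable M" and l: "0 < l" "l < 1"
    and Ix: "(\<integral>\<^sup>+\<omega>. ennreal (exp (x * S \<omega>)) \<partial>M) = ennreal a" "0 < a"
    and Iz: "(\<integral>\<^sup>+\<omega>. ennreal (exp (z * S \<omega>)) \<partial>M) = ennreal b" "0 < b"
  shows "(\<integral>\<^sup>+\<omega>. ennreal (exp ((l*x + (1-l)*z) * S \<omega>)) \<partial>M)
           \<le> ennreal (exp (l * ln a + (1-l) * ln b))"
proof -
  define c where "c = l * ln a + (1-l) * ln b"
  have pw: "exp ((l*x + (1-l)*z) * t) \<le> exp c * ((l/a) * exp (x * t) + ((1-l)/b) * exp (z * t))" for t
  proof -
    have "exp ((l*x + (1-l)*z) * t - c) = exp ((1-l) * (z * t - ln b) + l * (x * t - ln a))"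
      by (simp add: c_def algebra_simps)
    also have "\<dots> \<le> (1-l) * exp (z * t - ln b) + l * exp (x * t - ln a)"
      using convex_onD[OF exp_convex, of l "z * t - ln b" "x * t - ln a"] l by simp
    also have "\<dots> = ((l/a) * exp (x * t) + ((1-l)/b) * exp (z * t))"
      using Ix(2) Iz(2) by (simp add: exp_diff field_simps)
    finally have "exp ((l*x + (1-l)*z) * t - c) \<le> ((l/a) * exp (x * t) + ((1-l)/b) * exp (z * t))" .
    then show ?thesis by (simp add: exp_diff divide_le_eq mult.commute)
  qed
  have "(\<integral>\<^sup>+\<omega>. ennreal (exp ((l*x + (1-l)*z) * S \<omega>)) \<partial>M)
     \<le> (\<integral>\<^sup>+\<omega>. ennreal (exp c) * (ennreal (l/a) * ennreal (exp (x * S \<omega>)) + ennreal ((1-l)/b) * ennreal (exp (z * S \<omega>))) \<partial>M)"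
  proof (rule nn_integral_mono)
    fix \<omega>
    have "ennreal (exp ((l*x + (1-l)*z) * S \<omega>)) \<le> ennreal (exp c * ((l/a) * exp (x*S \<omega>) + ((1-l)/b) * exp (z*S \<omega>)))"
      using pw ennreal_leI by blast
    also have "\<dots> = ennreal (exp c) * (ennreal (l/a) * ennreal (exp (x * S \<omega>)) + ennreal ((1-l)/b) * ennreal (exp (z * S \<omega>)))"
      using l Ix(2) Iz(2) by (simp add: ennreal_mult[symmetric] ennreal_plus[symmetric] del: ennreal_plus)
    finally show "ennreal (exp ((l*x + (1-l)*z) * S \<omega>)) \<le> \<dots>" .
  qed
  also have "\<dots> = ennreal (exp c) * (ennreal (l/a) * ennreal a + ennreal ((1-l)/b) * ennreal b)"
    using S by (simp add: nn_integral_cmult nn_integral_add Ix(1) Iz(1))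
  also have "\<dots> = ennreal (exp c)"
    using l Ix(2) Iz(2) by (simp add: ennreal_mult[symmetric] ennreal_plus[symmetric] del: ennreal_plus)
  finally show ?thesis by (simp add: c_def)
qed

lemma lnE_fin:
  assumes "lnE I / ereal (real (Suc m)) = ereal p"
  shows "\<exists>a>0. I = ennreal a \<and> p = ln a / real (Suc m)"
proof -
  have "I \<noteq> \<top>" using assms by (auto simp: lnE_def)
  moreover have "I \<noteq> 0" using assms by (auto simp: lnE_def)
  ultimately obtain a where a: "I = ennreal a" "0 < a"
    by (metis ennreal_cases ennreal_eq_0_iff not_le top_neq_ennreal ennreal_0)
  then show ?thesis using assms
    by (auto simp: lnE_def)
qed

lemma cvx_seq:
  fixes G :: "'y \<Rightarrow> real"
  assumes meas: "\<And>k. (\<lambda>\<omega>. G (X k \<omega>)) \<in> borel_measurable M"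
    and l: "0 < l" "l < 1"
    and hx: "cgf_seq M X (\<lambda>y. x * G y) m = ereal px"
    and hz: "cgf_seq M X (\<lambda>y. z * G y) m = ereal pz"
    and hy: "cgf_seq M X (\<lambda>y. (l*x + (1-l)*z) * G y) m = ereal py"
  shows "py \<le> l * px + (1-l) * pz"
proof -
  define S where "S = (\<lambda>\<omega>. \<Sum>k<Suc m. G (X k \<omega>))"
  have S: "S \<in> borel_measurable M" unfolding S_def using meas by auto
  have eq: "(\<Sum>k<Suc m. t * G (X k \<omega>)) = t * S \<omega>" for t \<omega>
    by (simp add: S_def sum_distrib_left del: sum.lessThan_Suc)
  obtain a where a: "a > 0" "(\<integral>\<^sup>+\<omega>. ennreal (exp (x * S \<omega>)) \<partial>M) = ennreal a" "px = ln a / real (Suc m)"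
    using lnE_fin[OF hx[unfolded cgf_seq_def eq]] by auto
  obtain b where b: "b > 0" "(\<integral>\<^sup>+\<omega>. ennreal (exp (z * S \<omega>)) \<partial>M) = ennreal b" "pz = ln b / real (Suc m)"
    using lnE_fin[OF hz[unfolded cgf_seq_def eq]] by auto
  obtain d where d: "d > 0" "(\<integral>\<^sup>+\<omega>. ennreal (exp ((l*x + (1-l)*z) * S \<omega>)) \<partial>M) = ennreal d" "py = ln d / real (Suc m)"
    using lnE_fin[OF hy[unfolded cgf_seq_def eq]] by auto
  have "ennreal d \<le> ennreal (exp (l * ln a + (1-l) * ln b))"
    using holder_exp[OF S l a(2) a(1) b(2) b(1)] d(2) by simp
  then have "d \<le> exp (l * ln a + (1-l) * ln b)" by (simp add: ennreal_le_iff)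
  then have "ln d \<le> l * ln a + (1-l) * ln b"
    using d(1) by (metis ln_exp ln_le_cancel_iff exp_gt_zero)
  then have "ln d / real (Suc m) \<le> (l * ln a + (1-l) * ln b) / real (Suc m)"
    by (simp add: divide_right_mono)
  then show ?thesis using a(3) b(3) d(3) by (simp add: add_divide_distrib)
qed

lemma ereal_fin_eventually:
  assumes "f \<longlonglongrightarrow> ereal L"
  shows "eventually (\<lambda>m. f m = ereal (real_of_ereal (f m))) sequentially"
proof -
  have "eventually (\<lambda>m. f m > ereal (L - 1)) sequentially"
    using assms by (rule order_tendstoD) simp
  moreover have "eventually (\<lambda>m. f m < ereal (L + 1)) sequentially"
    using assms by (rule order_tendstoD) simp
  ultimately show ?thesis
  proof eventually_elim
    case (elim m) then show ?case by (cases "f m") auto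
  qed
qed

lemma cvx_lim:
  fixes G :: "'y \<Rightarrow> real"
  assumes meas: "\<And>k. (\<lambda>\<omega>. G (X k \<omega>)) \<in> borel_measurable M"
    and l: "0 < l" "l < 1"
    and hx: "cgf_seq M X (\<lambda>y. x * G y) \<longlonglongrightarrow> ereal Lx"
    and hz: "cgf_seq M X (\<lambda>y. z * G y) \<longlonglongrightarrow> ereal Lz"
    and hy: "cgf_seq M X (\<lambda>y. (l*x + (1-l)*z) * G y) \<longlonglongrightarrow> ereal Ly"
  shows "Ly \<le> l * Lx + (1-l) * Lz"
proof -
  let ?rx = "\<lambda>m. real_of_ereal (cgf_seq M X (\<lambda>y. x * G y) m)"
  let ?rz = "\<lambda>m. real_of_ereal (cgf_seq M X (\<lambda>y. z * G y) m)"
  let ?ry = "\<lambda>m. real_of_ereal (cgf_seq M X (\<lambda>y. (l*x + (1-l)*z) * G y) m)"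
  have 1: "?ry \<longlonglongrightarrow> Ly" using hy by simp
  have 2: "(\<lambda>m. l * ?rx m + (1-l) * ?rz m) \<longlonglongrightarrow> l * Lx + (1-l) * Lz"
    using hx hz by (intro tendsto_intros) simp_all
  have 3: "eventually (\<lambda>m. ?ry m \<le> l * ?rx m + (1-l) * ?rz m) sequentially"
    using ereal_fin_eventually[OF hx] ereal_fin_eventually[OF hy] ereal_fin_eventually[OF hz]
  proof eventually_elim
    case (elim m)
    show ?case by (rule cvx_seq[OF meas l elim(1) elim(3) elim(2)])
  qed
  show ?thesis by (rule tendsto_le[OF trivial_limit_sequentially 2 1 3])
qed

lemma shift_seq:
  fixes G :: "'y \<Rightarrow> real"
  assumes meas: "\<And>k. (\<lambda>\<omega>. G (X k \<omega>)) \<in> borel_measurable M"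
  shows "cgf_seq M X (\<lambda>y. G y + c) m = cgf_seq M X G m + ereal c"
proof -
  define I where "I = (\<integral>\<^sup>+\<omega>. ennreal (exp (\<Sum>k<Suc m. G (X k \<omega>))) \<partial>M)"
  define e where "e = exp (real (Suc m) * c)"
  have epos: "e > 0" by (simp add: e_def)
  have "(\<integral>\<^sup>+\<omega>. ennreal (exp (\<Sum>k<Suc m. G (X k \<omega>) + c)) \<partial>M)
      = (\<integral>\<^sup>+\<omega>. ennreal (exp (\<Sum>k<Suc m. G (X k \<omega>))) * ennreal e \<partial>M)"
    by (simp add: sum.distrib e_def exp_add ennreal_mult del: sum.lessThan_Suc)
  also have "\<dots> = I * ennreal e"
    unfolding I_def using meas by (intro nn_integral_multc) auto
  finally have eq: "(\<integral>\<^sup>+\<omega>. ennreal (exp (\<Sum>k<Suc m. G (X k \<omega>) + c)) \<partial>M) = I * ennreal e" .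
  have key: "lnE (I * ennreal e) / ereal (real (Suc m)) = lnE I / ereal (real (Suc m)) + ereal c"
  proof (cases "I = \<top>")
    case True
    then have "I * ennreal e = \<top>" using epos by (simp add: ennreal_mult_eq_top_iff)
    then show ?thesis using True by (simp add: lnE_def)
  next
    case False
    show ?thesis
    proof (cases "I = 0")
      case True
      then show ?thesis by (simp add: lnE_def)
    next
      case False2: False
      obtain a where a: "I = ennreal a" "a > 0"
        using False False2 by (metis ennreal_cases ennreal_eq_0_iff not_le top_neq_ennreal ennreal_0)
      have "I * ennreal e = ennreal (a * e)" using a epos by (simp add: ennreal_mult)
      moreover have "ln (a * e) = ln a + real (Suc m) * c"
        using a epos by (simp add: ln_mult e_def)
      ultimately show ?thesis using a epos
        by (simp add: lnE_def ennreal_eq_0_iff add_divide_distrib not_le del: of_nat_Suc)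
    qed
  qed
  show ?thesis unfolding cgf_seq_def eq I_def[symmetric] by (rule key)
qed

lemma cgf_eq:
  assumes "cgf_seq M X G \<longlonglongrightarrow> L"
  shows "cgf M X G = L"
  unfolding cgf_def using assms by (auto intro: LIMSEQ_unique)

lemma seq_zero:
  assumes "prob_space M"
  shows "cgf_seq M X (\<lambda>y. 0) m = 0"
proof -
  have "(\<integral>\<^sup>+\<omega>. ennreal (exp (\<Sum>k<Suc m. (0::real))) \<partial>M) = 1"
    using prob_space.emeasure_space_1[OF assms] by simp
  then show ?thesis by (simp add: cgf_seq_def lnE_def)
qed

theorem propositiont:
  fixes M :: "'a measure" and Y :: "'y measure"
    and X0 X1 :: "nat \<Rightarrow> 'a \<Rightarrow> 'y" and \<tau> :: "'a \<Rightarrow> nat"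
    and rhoa :: real and F :: "'y \<Rightarrow> real" and \<Theta> :: "(real \<times> real) set"
    and \<theta>1o :: real
  assumes prob: "prob_space M"
    and stat0: "stationary M Y X0" and stat1: "stationary M Y X1"
    and tau_rv: "\<tau> \<in> measurable M (count_space UNIV)"
    and indep01: "prob_space.indep_var M (PiM UNIV (\<lambda>_. Y)) (proc X0) (PiM UNIV (\<lambda>_. Y)) (proc X1)"
    and indep_tau: "prob_space.indep_set M
        {(\<lambda>\<omega>. (proc X0 \<omega>, proc X1 \<omega>)) -` A \<inter> space M | A.
           A \<in> sets (PiM UNIV (\<lambda>_. Y) \<Otimes>\<^sub>M PiM UNIV (\<lambda>_. Y))}
        {\<tau> -` B \<inter> space M | B. B \<in> sets (count_space (UNIV :: nat set))}"
    \<comment> \<open>scalar-offset setting: F + r satisfies (A1) and (A3) for some r\<close>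
    and offset: "\<exists>r::real. A1 M Y X0 X1 (\<lambda>y. F y + r) \<and> A3 M Y X0 X1 rhoa (\<lambda>y. F y + r)"
    \<comment> \<open>(A2)\<close>
    and A2_pos: "0 < rhoa"
    and A2: "(\<lambda>n. ln (measure M {\<omega> \<in> space M. n \<le> \<tau> \<omega>}) / real n) \<longlonglongrightarrow> - rhoa"
    \<comment> \<open>(A4) for the linear family with basis psi = (F; 1)\<close>
    and Theta_open: "open \<Theta>"
    and A4_A3: "\<forall>\<theta>\<in>\<Theta>. A3 M Y X0 X1 rhoa (Ftheta F \<theta>)"
    and A4_psi: "classG M Y X0 X1 F \<and> classG M Y X0 X1 (\<lambda>_. 1)"
    and A4_C1: "\<exists>U. open U \<and>
        {(th, \<theta>). \<theta> \<in> \<Theta> \<and> th \<in> {0..vplus M X0 rhoa (Ftheta F \<theta>)}} \<subseteq> U \<and>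
        (\<forall>(th, \<theta>)\<in>U. has_finite_cgf M X0 (\<lambda>y. th * Ftheta F \<theta> y)) \<and>
        (\<exists>D :: real \<times> (real \<times> real) \<Rightarrow> (real \<times> (real \<times> real)) \<Rightarrow>\<^sub>L real.
           (\<forall>p\<in>U. ((\<lambda>(th, \<theta>). real_of_ereal (cgf M X0 (\<lambda>y. th * Ftheta F \<theta> y)))
                      has_derivative blinfun_apply (D p)) (at p)) \<and> continuous_on U D)"
    and m1_pos: "\<forall>\<theta>\<in>\<Theta>. 0 < mean (marg M Y X1) (Ftheta F \<theta>)"
    \<comment> \<open>theta_1 minimises vartheta |-> Lambda_0(vartheta F) - vartheta pi^1(F) over R\<close>
    and argmin_fin: "has_finite_cgf M X0 (\<lambda>y. \<theta>1o * F y)"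
    and argmin: "\<forall>th::real. has_cgf M X0 (\<lambda>y. th * F y) \<longrightarrow>
        cgf M X0 (\<lambda>y. \<theta>1o * F y) - ereal (\<theta>1o * mean (marg M Y X1) F)
          \<le> cgf M X0 (\<lambda>y. th * F y) - ereal (th * mean (marg M Y X1) F)"
    and star_in: "(\<theta>1o, 0 + (rhoa - real_of_ereal (cgf M X0 (Ftheta F (\<theta>1o, 0))))) \<in> \<Theta>"
  shows "\<forall>\<kappa>::real. \<kappa> > 1 \<longrightarrow>
     (\<forall>\<theta>\<in>\<Theta>. Jbar M Y X0 X1 rhoa F \<kappa> (\<theta>1o, 0 + (rhoa - real_of_ereal (cgf M X0 (Ftheta F (\<theta>1o, 0)))))
                 \<le> Jbar M Y X0 X1 rhoa F \<kappa> \<theta>)"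
proof -
  have hF: "F \<in> borel_measurable Y" using A4_psi by (simp add: classG_def)
  have measX: "X0 k \<in> measurable M Y" for k using stat0 by (simp add: stationary_def)
  have hFk: "(\<lambda>\<omega>. F (X0 k \<omega>)) \<in> borel_measurable M" for k
    using measurable_compose[OF measX hF] .
  have measG: "(\<lambda>\<omega>. a * F (X0 k \<omega>) + b) \<in> borel_measurable M" for a b k
    using hFk[of k] by (intro borel_measurable_add borel_measurable_times borel_measurable_const) auto
  have measG': "(\<lambda>\<omega>. a * F (X0 k \<omega>)) \<in> borel_measurable M" for a k
    using hFk[of k] by (intro borel_measurable_times borel_measurable_const) auto
  have lin: "(\<lambda>y. t * Ftheta F \<theta> y) = (\<lambda>y. (t * fst \<theta>) * F y + t * snd \<theta>)" for t \<theta>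
    by (auto simp: Ftheta_def algebra_simps)
  define P where "P = marg M Y X1"
  have measX1: "X1 0 \<in> measurable M Y" using stat1 by (simp add: stationary_def)
  have probP: "prob_space P" unfolding P_def marg_def
    by (rule prob_space.prob_space_distr[OF prob measX1])
  define mF where "mF = mean P F"
  have intF: "integrable P F" using A4_psi by (simp add: classG_def P_def)
  have meanF: "mean P (Ftheta F \<theta>) = fst \<theta> * mF + snd \<theta>" for \<theta>
  proof -
    interpret p: prob_space P by (rule probP)
    have "mean P (Ftheta F \<theta>) = integral\<^sup>L P (\<lambda>y. fst \<theta> * F y + snd \<theta>)"
      by (simp add: mean_def Ftheta_def)
    also have "\<dots> = fst \<theta> * integral\<^sup>L P F + snd \<theta>"
      using intF by (simp add: integral_add integrable_mult_right p.prob_space)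
    finally show ?thesis by (simp add: mF_def mean_def)
  qed
  from argmin_fin obtain L0 where hL0: "cgf_seq M X0 (\<lambda>y. \<theta>1o * F y) \<longlonglongrightarrow> ereal L0"
    by (auto simp: has_finite_cgf_def)
  have cL0: "cgf M X0 (\<lambda>y. \<theta>1o * F y) = ereal L0" using cgf_eq[OF hL0] .
  have FF0: "Ftheta F (\<theta>1o, 0) = (\<lambda>y. \<theta>1o * F y)" by (simp add: Ftheta_def)
  define c where "c = rhoa - L0"
  have ts: "(\<theta>1o, 0 + (rhoa - real_of_ereal (cgf M X0 (Ftheta F (\<theta>1o, 0))))) = (\<theta>1o, c)"
    by (simp add: FF0 cL0 c_def)
  have vp: "0 < vplus M X0 rhoa (Ftheta F \<theta>) \<and> (\<exists>th0. 0 < th0 \<and> th0 < vplus M X0 rhoa (Ftheta F \<theta>) \<and>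
        cgf M X0 (\<lambda>y. th0 * Ftheta F \<theta> y) = ereal 0) \<and>
        cgf M X0 (\<lambda>y. vplus M X0 rhoa (Ftheta F \<theta>) * Ftheta F \<theta> y) = ereal rhoa"
    if "\<theta> \<in> \<Theta>" for \<theta>
  proof -
    have "A3 M Y X0 X1 rhoa (Ftheta F \<theta>)" using A4_A3 that by blast
    then have ex: "\<exists>thp th0. 0 < th0 \<and> th0 < thp \<and>
        cgf M X0 (\<lambda>y. th0 * Ftheta F \<theta> y) = ereal 0 \<and> cgf M X0 (\<lambda>y. thp * Ftheta F \<theta> y) = ereal rhoa"
    proof -
      from \<open>A3 M Y X0 X1 rhoa (Ftheta F \<theta>)\<close> obtain th0 thp where "0 < th0" "th0 < thp"
        "cgf M X0 (\<lambda>y. th0 * Ftheta F \<theta> y) = ereal 0" "cgf M X0 (\<lambda>y. thp * Ftheta F \<theta> y) = ereal rhoa"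
        unfolding A3_def by auto
      then show ?thesis by blast
    qed
    have "\<exists>th0. 0 < th0 \<and> th0 < vplus M X0 rhoa (Ftheta F \<theta>) \<and>
        cgf M X0 (\<lambda>y. th0 * Ftheta F \<theta> y) = ereal 0 \<and> cgf M X0 (\<lambda>y. vplus M X0 rhoa (Ftheta F \<theta>) * Ftheta F \<theta> y) = ereal rhoa"
      unfolding vplus_def by (rule someI_ex[OF ex])
    then show ?thesis by auto
  qed
  from A4_C1 obtain U where U: "{(th, \<theta>). \<theta> \<in> \<Theta> \<and> th \<in> {0..vplus M X0 rhoa (Ftheta F \<theta>)}} \<subseteq> U"
      "\<forall>(th, \<theta>)\<in>U. has_finite_cgf M X0 (\<lambda>y. th * Ftheta F \<theta> y)" by blast
  have fin: "has_finite_cgf M X0 (\<lambda>y. th * Ftheta F \<theta> y)"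
    if "\<theta> \<in> \<Theta>" "0 \<le> th" "th \<le> vplus M X0 rhoa (Ftheta F \<theta>)" for th \<theta>
  proof -
    have "(th, \<theta>) \<in> U" using U(1) that by auto
    then show ?thesis using U(2) by auto
  qed
  have finval: "cgf_seq M X0 (\<lambda>y. th * Ftheta F \<theta> y) \<longlonglongrightarrow> ereal r"
    if hh: "\<theta> \<in> \<Theta>" "0 \<le> th" "th \<le> vplus M X0 rhoa (Ftheta F \<theta>)"
       "cgf M X0 (\<lambda>y. th * Ftheta F \<theta> y) = ereal r" for th \<theta> r
  proof -
    obtain r' where r': "cgf_seq M X0 (\<lambda>y. th * Ftheta F \<theta> y) \<longlonglongrightarrow> ereal r'"
      using fin[OF hh(1-3)] by (auto simp: has_finite_cgf_def)
    with cgf_eq[OF r'] hh(4) show ?thesis by simp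
  qed
  have bound: "vplus M X0 rhoa (Ftheta F \<theta>) * mean P (Ftheta F \<theta>) \<le> rhoa - L0 + \<theta>1o * mF"
    if th: "\<theta> \<in> \<Theta>" for \<theta>
  proof -
    define v where "v = vplus M X0 rhoa (Ftheta F \<theta>)"
    have v: "0 < v" "cgf M X0 (\<lambda>y. v * Ftheta F \<theta> y) = ereal rhoa" using vp[OF th] by (auto simp: v_def)
    have s: "cgf_seq M X0 (\<lambda>y. v * Ftheta F \<theta> y) \<longlonglongrightarrow> ereal rhoa"
      using finval[OF th _ _ v(2)] v(1) by (simp add: v_def)
    define a where "a = v * fst \<theta>"
    define b where "b = v * snd \<theta>"
    have s2: "cgf_seq M X0 (\<lambda>y. a * F y + b) \<longlonglongrightarrow> ereal rhoa"
      using s unfolding lin a_def b_def .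
    have sh: "cgf_seq M X0 (\<lambda>y. a * F y + b) m = cgf_seq M X0 (\<lambda>y. a * F y) m + ereal b" for m
      using shift_seq[of "\<lambda>y. a * F y" X0 M b m] measG' by simp
    have eqs: "cgf_seq M X0 (\<lambda>y. a * F y) m = cgf_seq M X0 (\<lambda>y. a * F y + b) m + ereal (- b)" for m
      unfolding sh by (cases "cgf_seq M X0 (\<lambda>y. a * F y) m") auto
    have s3: "cgf_seq M X0 (\<lambda>y. a * F y) \<longlonglongrightarrow> ereal rhoa + ereal (- b)"
      unfolding eqs by (intro tendsto_add_ereal[OF _ _ s2 tendsto_const]) auto
    have hc: "has_cgf M X0 (\<lambda>y. a * F y)" using s3 by (auto simp: has_cgf_def)
    have ca: "cgf M X0 (\<lambda>y. a * F y) = ereal (rhoa - b)" using cgf_eq[OF s3] by simp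
    have "cgf M X0 (\<lambda>y. \<theta>1o * F y) - ereal (\<theta>1o * mean (marg M Y X1) F) \<le> cgf M X0 (\<lambda>y. a * F y) - ereal (a * mean (marg M Y X1) F)"
      using argmin hc by blast
    then have "ereal L0 - ereal (\<theta>1o * mF) \<le> ereal (rhoa - b) - ereal (a * mF)"
      by (simp only: cL0 ca mF_def P_def)
    then have "L0 - \<theta>1o * mF \<le> rhoa - b - a * mF" by simp
    then show ?thesis using meanF[of \<theta>] by (simp add: v_def[symmetric] a_def b_def algebra_simps)
  qed
  define Gs where "Gs = Ftheta F (\<theta>1o, c)"
  have sin: "(\<theta>1o, c) \<in> \<Theta>" using star_in ts by simp
  define vs where "vs = vplus M X0 rhoa Gs"
  obtain th0 where th0: "0 < th0" "th0 < vs" "cgf M X0 (\<lambda>y. th0 * Gs y) = ereal 0"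
    and vs: "0 < vs" "cgf M X0 (\<lambda>y. vs * Gs y) = ereal rhoa"
    using vp[OF sin] by (auto simp: vs_def Gs_def)
  have measGs: "(\<lambda>\<omega>. Gs (X0 k \<omega>)) \<in> borel_measurable M" for k
    using measG by (simp add: Gs_def Ftheta_def)
  have cv: "Ly \<le> l * Lx + (1-l) * Lz"
    if "0 < l" "l < 1" "cgf_seq M X0 (\<lambda>y. x * Gs y) \<longlonglongrightarrow> ereal Lx"
      "cgf_seq M X0 (\<lambda>y. z * Gs y) \<longlonglongrightarrow> ereal Lz" "yy = l * x + (1-l) * z"
      "cgf_seq M X0 (\<lambda>y. yy * Gs y) \<longlonglongrightarrow> ereal Ly" for l x z yy Lx Ly Lz
    using cvx_lim[OF measGs that(1,2,3,4)] that(5,6) by simp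
  have s1: "cgf_seq M X0 (\<lambda>y. 1 * Gs y) \<longlonglongrightarrow> ereal rhoa"
  proof -
    have e: "(\<lambda>y. 1 * Gs y) = (\<lambda>y. \<theta>1o * F y + c)" by (simp add: Gs_def Ftheta_def)
    have "cgf_seq M X0 (\<lambda>y. \<theta>1o * F y) \<longlonglongrightarrow> ereal L0" by (rule hL0)
    then have "(\<lambda>m. cgf_seq M X0 (\<lambda>y. \<theta>1o * F y) m + ereal c) \<longlonglongrightarrow> ereal L0 + ereal c"
      by (intro tendsto_add_ereal[OF _ _ _ tendsto_const]) auto
    moreover have sh: "cgf_seq M X0 (\<lambda>y. \<theta>1o * F y + c) = (\<lambda>m. cgf_seq M X0 (\<lambda>y. \<theta>1o * F y) m + ereal c)"
      using shift_seq[of "\<lambda>y. \<theta>1o * F y" X0 M c] measG' by auto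
    ultimately show ?thesis unfolding e sh by (simp add: c_def)
  qed
  have sv: "cgf_seq M X0 (\<lambda>y. vs * Gs y) \<longlonglongrightarrow> ereal rhoa"
    using finval[OF sin _ _ vs(2)[unfolded Gs_def]] vs(1) by (simp add: vs_def Gs_def)
  have s0: "cgf_seq M X0 (\<lambda>y. th0 * Gs y) \<longlonglongrightarrow> ereal 0"
    using finval[OF sin _ _ th0(3)[unfolded Gs_def]] th0 by (simp add: vs_def Gs_def)
  have sz: "cgf_seq M X0 (\<lambda>y. 0 * Gs y) \<longlonglongrightarrow> ereal 0"
  proof -
    have "cgf_seq M X0 (\<lambda>y. 0) = (\<lambda>m. 0)" using seq_zero[OF prob, of X0] by auto
    then show ?thesis by (simp add: zero_ereal_def[symmetric])
  qed
  have vs1: "vs = 1"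
  proof (rule ccontr)
    assume ne: "vs \<noteq> 1"
    show False
    proof (cases "vs < 1")
      case True
      define l where "l = (1 - vs) / (1 - th0)"
      have l: "0 < l" "l < 1" using True th0 by (auto simp: l_def field_simps)
      have "l * (1 - th0) = 1 - vs" using True th0 by (simp add: l_def)
      then have "vs = l * th0 + (1 - l) * 1" by (simp add: algebra_simps)
      from cv[OF l s0 s1 this sv] have "rhoa \<le> (1 - l) * rhoa" by simp
      then show False using l A2_pos by (simp add: algebra_simps) (metis mult_pos_pos not_le)
    next
      case False
      then have gt: "vs > 1" using ne by simp
      consider "th0 < 1" | "th0 = 1" | "th0 > 1" by linarith
      then show False
      proof cases
        case 1
        define l where "l = (vs - 1) / (vs - th0)"
        have l: "0 < l" "l < 1" using 1 gt th0 by (auto simp: l_def field_simps)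
        have "l * (vs - th0) = vs - 1" using 1 gt th0 by (simp add: l_def)
        then have "1 = l * th0 + (1 - l) * vs" by (simp add: algebra_simps)
        from cv[OF l s0 sv this s1] have "rhoa \<le> (1 - l) * rhoa" by simp
        then show False using l A2_pos by (simp add: algebra_simps) (metis mult_pos_pos not_le)
      next
        case 2
        have "cgf_seq M X0 (\<lambda>y. th0 * Gs y) \<longlonglongrightarrow> ereal rhoa" using s1 2 by simp
        then have "ereal 0 = ereal rhoa" using s0 LIMSEQ_unique by blast
        then show False using A2_pos by simp
      next
        case 3
        define l where "l = 1 - 1 / th0"
        have l: "0 < l" "l < 1" using 3 by (auto simp: l_def field_simps)
        have "1 = l * 0 + (1 - l) * th0" using 3 by (simp add: l_def)
        from cv[OF l sz s0 this s1] have "rhoa \<le> 0" by simp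
        then show False using A2_pos by simp
      qed
    qed
  qed
  show ?thesis unfolding ts
  proof (intro allI impI ballI)
    fix \<kappa> :: real and \<theta>
    assume k: "1 < \<kappa>" and th: "\<theta> \<in> \<Theta>"
    have ms: "mean P Gs = \<theta>1o * mF + c" using meanF by (simp add: Gs_def)
    have b: "vplus M X0 rhoa (Ftheta F \<theta>) * mean P (Ftheta F \<theta>) \<le> mean P Gs * vs"
      using bound[OF th] ms vs1 by (simp add: c_def)
    have p: "0 < vplus M X0 rhoa (Ftheta F \<theta>) * mean P (Ftheta F \<theta>)"
      using vp[OF th] m1_pos th by (simp add: P_def)
    have "ln \<kappa> / (mean P Gs * vs) \<le> ln \<kappa> / (mean P (Ftheta F \<theta>) * vplus M X0 rhoa (Ftheta F \<theta>))"
      by (rule divide_left_mono) (use b p k in \<open>auto simp: mult.commute\<close>)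
    then show "Jbar M Y X0 X1 rhoa F \<kappa> (\<theta>1o, c) \<le> Jbar M Y X0 X1 rhoa F \<kappa> \<theta>"
      by (simp add: Jbar_def P_def Gs_def vs_def)
  qed
qed

end
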